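(* Let $H:=\{(s,t)\in\mathbb{R}^2: t\ge 0\}$, equipped with the metric induced by the supremum norm $\|(a,b)\|_\infty=\max\{|a|,|b|\}$ on $\mathbb{R}^2$. Then $H$ admits two distinct reversible conical bicombings.
   Context: A bicombing on a metric space $(X,d)$ is a map $\sigma\colon X\times X\times[0,1]\to X$ such that each $\sigma_{xy}:=\sigma(x,y,\cdot)$ is a geodesic from $x$ to $y$ ($\sigma_{xy}(0)=x$, $\sigma_{xy}(1)=y$, $d(\sigma_{xy}(s),\sigma_{xy}(t))=|s-t|d(x,y)$). It is conical if $d(\sigma_{xy}(t),\sigma_{x'y'}(t))\le(1-t)d(x,x')+t\,d(y,y')$ for all $x,y,x',y'$, $t\in[0,1]$, and reversible if $\sigma_{xy}(t)=\sigma_{yx}(1-t)$ for all $x,y,t$. *)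

theory Defs
  imports Complex_Main
begin

text \<open>A bicombing on a metric space (X,d), given as a carrier set X with distance d.
  sigma x y is the geodesic from x to y, parametrised on [0,1]; only its values for
  x, y in X and t in [0,1] are relevant.\<close>

definition bicombing :: "('a \<Rightarrow> 'a \<Rightarrow> real) \<Rightarrow> 'a set \<Rightarrow> ('a \<Rightarrow> 'a \<Rightarrow> real \<Rightarrow> 'a) \<Rightarrow> bool" where
  "bicombing d X \<sigma> \<longleftrightarrow>
     (\<forall>x\<in>X. \<forall>y\<in>X.
        (\<forall>t\<in>{0..1}. \<sigma> x y t \<in> X) \<and>
        \<sigma> x y 0 = x \<and> \<sigma> x y 1 = y \<and>
        (\<forall>s\<in>{0..1}. \<forall>t\<in>{0..1}. d (\<sigma> x y s) (\<sigma> x y t) = \<bar>s - t\<bar> * d x y))"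

definition conical_bicombing :: "('a \<Rightarrow> 'a \<Rightarrow> real) \<Rightarrow> 'a set \<Rightarrow> ('a \<Rightarrow> 'a \<Rightarrow> real \<Rightarrow> 'a) \<Rightarrow> bool" where
  "conical_bicombing d X \<sigma> \<longleftrightarrow> bicombing d X \<sigma> \<and>
     (\<forall>x\<in>X. \<forall>y\<in>X. \<forall>x'\<in>X. \<forall>y'\<in>X. \<forall>t\<in>{0..1}.
        d (\<sigma> x y t) (\<sigma> x' y' t) \<le> (1 - t) * d x x' + t * d y y')"

definition reversible_bicombing :: "('a \<Rightarrow> 'a \<Rightarrow> real) \<Rightarrow> 'a set \<Rightarrow> ('a \<Rightarrow> 'a \<Rightarrow> real \<Rightarrow> 'a) \<Rightarrow> bool" where
  "reversible_bicombing d X \<sigma> \<longleftrightarrow> bicombing d X \<sigma> \<and>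
     (\<forall>x\<in>X. \<forall>y\<in>X. \<forall>t\<in>{0..1}. \<sigma> x y t = \<sigma> y x (1 - t))"

definition sup_dist :: "real \<times> real \<Rightarrow> real \<times> real \<Rightarrow> real" where
  "sup_dist p q = max \<bar>fst p - fst q\<bar> \<bar>snd p - snd q\<bar>"

definition upper_half_plane :: "(real \<times> real) set" where
  "upper_half_plane = {p. snd p \<ge> 0}"

end

theory Submission
  imports Defs
begin

definition lin2 :: "real \<times> real \<Rightarrow> real \<times> real \<Rightarrow> real \<Rightarrow> real \<times> real" where
  "lin2 x y t = ((1-t)*fst x + t*fst y, (1-t)*snd x + t*snd y)"

definition Wf :: "real \<times> real \<Rightarrow> real \<times> real \<Rightarrow> real \<Rightarrow> real" where
  "Wf x y t = ((1-t)*\<bar>fst x\<bar> + t*\<bar>fst y\<bar> - \<bar>(1-t)*fst x + t*fst y\<bar>)/2"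

definition sig2 :: "real \<times> real \<Rightarrow> real \<times> real \<Rightarrow> real \<Rightarrow> real \<times> real" where
  "sig2 x y t = ((1-t)*fst x + t*fst y, max ((1-t)*snd x + t*snd y) (Wf x y t))"

lemma comb_bound:
  fixes a b a' b' t :: real
  assumes "0 \<le> t" "t \<le> 1"
  shows "\<bar>((1-t)*a + t*b) - ((1-t)*a' + t*b')\<bar> \<le> (1-t)*\<bar>a-a'\<bar> + t*\<bar>b-b'\<bar>"
proof -
  have "((1-t)*a + t*b) - ((1-t)*a' + t*b') = (1-t)*(a-a') + t*(b-b')" by algebra
  also have "\<bar>\<dots>\<bar> \<le> \<bar>(1-t)*(a-a')\<bar> + \<bar>t*(b-b')\<bar>" by (rule abs_triangle_ineq)
  also have "\<dots> = (1-t)*\<bar>a-a'\<bar> + t*\<bar>b-b'\<bar>" using assms by (simp add: abs_mult)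
  finally show ?thesis .
qed

lemma comb_le:
  fixes u v A B t :: real
  assumes "0 \<le> t" "t \<le> 1" "u \<le> A" "v \<le> B"
  shows "(1-t)*u + t*v \<le> (1-t)*A + t*B"
proof -
  have "(1-t)*u \<le> (1-t)*A" using assms by (intro mult_left_mono) auto
  moreover have "t*v \<le> t*B" using assms by (intro mult_left_mono) auto
  ultimately show ?thesis by linarith
qed

lemma max_diff: "\<bar>max (a::real) b - max c e\<bar> \<le> max \<bar>a - c\<bar> \<bar>b - e\<bar>"
  by (simp add: max_def abs_if)

lemma diff_lin: "((1-s)*a + s*b) - ((1-t)*a + t*(b::real)) = (t - s)*(a-b)"
  by algebra

lemma abs_diff_lin: "\<bar>((1-s)*a + s*b) - ((1-t)*a + t*(b::real))\<bar> = \<bar>s - t\<bar>*\<bar>a-b\<bar>"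
  unfolding diff_lin by (simp add: abs_mult abs_minus_commute)

lemma half_le: "(X::real) \<le> 2*Y \<Longrightarrow> X/2 \<le> Y" by simp
lemma half_abs: "\<bar>(X::real) - Y\<bar> \<le> 2*Z \<Longrightarrow> \<bar>X/2 - Y/2\<bar> \<le> Z" by simp

lemma lin_aux1: "(A::real) - P \<le> u \<Longrightarrow> Q \<le> R + P \<Longrightarrow> U + R = A \<Longrightarrow> U + Q - u \<le> 2*P"
  by linarith

lemma lin_aux2: "\<bar>(X::real)\<bar> \<le> F \<Longrightarrow> \<bar>Y\<bar> \<le> F \<Longrightarrow> \<bar>X - Y\<bar> \<le> 2*F"
  by linarith

lemma W_le:
  fixes a b r :: real
  assumes "0 \<le> r" "r \<le> 1"
  shows "(1-r)*\<bar>a\<bar> + r*\<bar>b\<bar> - \<bar>(1-r)*a + r*b\<bar> \<le> 2*(r*\<bar>a-b\<bar>)"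
    and "(1-r)*\<bar>a\<bar> + r*\<bar>b\<bar> - \<bar>(1-r)*a + r*b\<bar> \<le> 2*((1-r)*\<bar>a-b\<bar>)"
proof -
  have e1: "(1-r)*a + r*b = a + r*(b-a)" by algebra
  have h1: "\<bar>a\<bar> - r*\<bar>a-b\<bar> \<le> \<bar>(1-r)*a + r*b\<bar>" unfolding e1
    using assms abs_triangle_ineq2[of a "-(r*(b-a))"] by (simp add: abs_mult abs_minus_commute)
  have h2: "r*\<bar>b\<bar> \<le> r*(\<bar>a\<bar> + \<bar>a-b\<bar>)"
    using assms by (intro mult_left_mono) (auto simp: abs_triangle_ineq3)
  have h3: "r*(\<bar>a\<bar> + \<bar>a-b\<bar>) = r*\<bar>a\<bar> + r*\<bar>a-b\<bar>" by algebra
  have h4: "(1-r)*\<bar>a\<bar> + r*\<bar>a\<bar> = \<bar>a\<bar>" by (simp add: algebra_simps)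
  show "(1-r)*\<bar>a\<bar> + r*\<bar>b\<bar> - \<bar>(1-r)*a + r*b\<bar> \<le> 2*(r*\<bar>a-b\<bar>)"
    using h2 unfolding h3 by (intro lin_aux1[OF h1 _ h4])
  have e2: "(1-r)*a + r*b = b + (1-r)*(a-b)" by algebra
  have h1: "\<bar>b\<bar> - (1-r)*\<bar>a-b\<bar> \<le> \<bar>(1-r)*a + r*b\<bar>" unfolding e2
    using assms abs_triangle_ineq2[of b "-((1-r)*(a-b))"] by (simp add: abs_mult)
  have h2: "(1-r)*\<bar>a\<bar> \<le> (1-r)*(\<bar>b\<bar> + \<bar>a-b\<bar>)"
    using assms by (intro mult_left_mono) (auto simp: abs_triangle_ineq2)
  have h3: "(1-r)*(\<bar>b\<bar> + \<bar>a-b\<bar>) = (1-r)*\<bar>b\<bar> + (1-r)*\<bar>a-b\<bar>" by algebra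
  have h4: "r*\<bar>b\<bar> + (1-r)*\<bar>b\<bar> = \<bar>b\<bar>" by (simp add: algebra_simps)
  have "r*\<bar>b\<bar> + (1-r)*\<bar>a\<bar> - \<bar>(1-r)*a + r*b\<bar> \<le> 2*((1-r)*\<bar>a-b\<bar>)"
    using h2 unfolding h3 by (intro lin_aux1[OF h1 _ h4])
  then show "(1-r)*\<bar>a\<bar> + r*\<bar>b\<bar> - \<bar>(1-r)*a + r*b\<bar> \<le> 2*((1-r)*\<bar>a-b\<bar>)"
    by (simp add: add.commute)
qed

lemma W_lip:
  fixes a b s t :: real
  shows "\<bar>((1-s)*\<bar>a\<bar> + s*\<bar>b\<bar> - \<bar>(1-s)*a + s*b\<bar>) - ((1-t)*\<bar>a\<bar> + t*\<bar>b\<bar> - \<bar>(1-t)*a + t*b\<bar>)\<bar>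
     \<le> 2*(\<bar>s-t\<bar>*\<bar>a-b\<bar>)"
proof -
  have c1: "\<bar>((1-s)*\<bar>a\<bar> + s*\<bar>b\<bar>) - ((1-t)*\<bar>a\<bar> + t*\<bar>b\<bar>)\<bar> = \<bar>s-t\<bar>*\<bar>\<bar>a\<bar>-\<bar>b\<bar>\<bar>"
    by (rule abs_diff_lin)
  have c2: "\<bar>s-t\<bar>*\<bar>\<bar>a\<bar>-\<bar>b\<bar>\<bar> \<le> \<bar>s-t\<bar>*\<bar>a-b\<bar>"
    by (intro mult_left_mono) (auto simp: abs_triangle_ineq3)
  have c3: "\<bar>\<bar>(1-s)*a + s*b\<bar> - \<bar>(1-t)*a + t*b\<bar>\<bar> \<le> \<bar>((1-s)*a + s*b) - ((1-t)*a + t*b)\<bar>"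
    by (rule abs_triangle_ineq3)
  have c4: "\<bar>((1-s)*a + s*b) - ((1-t)*a + t*b)\<bar> = \<bar>s-t\<bar>*\<bar>a-b\<bar>" by (rule abs_diff_lin)
  have e: "((1-s)*\<bar>a\<bar> + s*\<bar>b\<bar> - \<bar>(1-s)*a + s*b\<bar>) - ((1-t)*\<bar>a\<bar> + t*\<bar>b\<bar> - \<bar>(1-t)*a + t*b\<bar>)
     = (((1-s)*\<bar>a\<bar> + s*\<bar>b\<bar>) - ((1-t)*\<bar>a\<bar> + t*\<bar>b\<bar>)) - (\<bar>(1-s)*a + s*b\<bar> - \<bar>(1-t)*a + t*b\<bar>)"
    by (simp add: algebra_simps)
  show ?thesis unfolding e
    by (rule lin_aux2) (use c1 c2 c3 c4 in linarith)+
qed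

lemma W_con:
  fixes a b a' b' t :: real
  assumes "0 \<le> t" "t \<le> 1"
  shows "\<bar>((1-t)*\<bar>a\<bar> + t*\<bar>b\<bar> - \<bar>(1-t)*a + t*b\<bar>) - ((1-t)*\<bar>a'\<bar> + t*\<bar>b'\<bar> - \<bar>(1-t)*a' + t*b'\<bar>)\<bar>
     \<le> 2*((1-t)*\<bar>a-a'\<bar> + t*\<bar>b-b'\<bar>)"
proof -
  have c1: "\<bar>((1-t)*\<bar>a\<bar> + t*\<bar>b\<bar>) - ((1-t)*\<bar>a'\<bar> + t*\<bar>b'\<bar>)\<bar> \<le> (1-t)*\<bar>\<bar>a\<bar>-\<bar>a'\<bar>\<bar> + t*\<bar>\<bar>b\<bar>-\<bar>b'\<bar>\<bar>"
    using assms by (rule comb_bound)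
  have c2: "(1-t)*\<bar>\<bar>a\<bar>-\<bar>a'\<bar>\<bar> + t*\<bar>\<bar>b\<bar>-\<bar>b'\<bar>\<bar> \<le> (1-t)*\<bar>a-a'\<bar> + t*\<bar>b-b'\<bar>"
    using assms by (intro comb_le abs_triangle_ineq3)
  have c3: "\<bar>\<bar>(1-t)*a + t*b\<bar> - \<bar>(1-t)*a' + t*b'\<bar>\<bar> \<le> \<bar>((1-t)*a + t*b) - ((1-t)*a' + t*b')\<bar>"
    by (rule abs_triangle_ineq3)
  have c4: "\<bar>((1-t)*a + t*b) - ((1-t)*a' + t*b')\<bar> \<le> (1-t)*\<bar>a-a'\<bar> + t*\<bar>b-b'\<bar>"
    using assms by (rule comb_bound)
  have e: "((1-t)*\<bar>a\<bar> + t*\<bar>b\<bar> - \<bar>(1-t)*a + t*b\<bar>) - ((1-t)*\<bar>a'\<bar> + t*\<bar>b'\<bar> - \<bar>(1-t)*a' + t*b'\<bar>)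
     = (((1-t)*\<bar>a\<bar> + t*\<bar>b\<bar>) - ((1-t)*\<bar>a'\<bar> + t*\<bar>b'\<bar>)) - (\<bar>(1-t)*a + t*b\<bar> - \<bar>(1-t)*a' + t*b'\<bar>)"
    by (simp add: algebra_simps)
  show ?thesis unfolding e
    by (rule lin_aux2) (use c1 c2 c3 c4 in linarith)+
qed

lemma max_mult_nonneg: "0 \<le> (c::real) \<Longrightarrow> max (c*u) (c*v) = c * max u v"
proof (cases "u \<le> v")
  case True assume c: "0 \<le> c"
  then have "c*u \<le> c*v" using True by (intro mult_left_mono)
  then show ?thesis using True by (simp add: max_def)
next
  case False assume c: "0 \<le> c"
  then have "c*v \<le> c*u" using False by (intro mult_left_mono) auto
  then show ?thesis using False by (simp add: max_def)
qed

lemma sd_fst: "\<bar>fst x - fst y\<bar> \<le> sup_dist x y" by (simp add: sup_dist_def)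
lemma sd_snd: "\<bar>snd x - snd y\<bar> \<le> sup_dist x y" by (simp add: sup_dist_def)

lemma lin2_geo:
  assumes "s \<in> {0..1}" "t \<in> {0..1}"
  shows "sup_dist (lin2 x y s) (lin2 x y t) = \<bar>s - t\<bar> * sup_dist x y"
  unfolding sup_dist_def lin2_def fst_conv snd_conv abs_diff_lin
  by (rule max_mult_nonneg) simp

lemma lin2_bic: "bicombing sup_dist upper_half_plane lin2"
  unfolding bicombing_def
proof (intro ballI conjI)
  fix x y t assume x: "x \<in> upper_half_plane" and y: "y \<in> upper_half_plane" and t: "t \<in> {0..1::real}"
  have "0 \<le> (1-t)*snd x + t*snd y" using x y t unfolding upper_half_plane_def by simp
  then show "lin2 x y t \<in> upper_half_plane" unfolding upper_half_plane_def lin2_def by simp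
next
  fix x y s t assume "s \<in> {0..1::real}" "t \<in> {0..1::real}"
  then show "sup_dist (lin2 x y s) (lin2 x y t) = \<bar>s - t\<bar> * sup_dist x y" by (rule lin2_geo)
qed (auto simp: lin2_def)

lemma lin2_con: "conical_bicombing sup_dist upper_half_plane lin2"
  unfolding conical_bicombing_def
proof (intro conjI ballI lin2_bic)
  fix x y x' y' and t :: real assume t: "t \<in> {0..1}"
  let ?R = "(1 - t) * sup_dist x x' + t * sup_dist y y'"
  have "\<bar>fst (lin2 x y t) - fst (lin2 x' y' t)\<bar> \<le> ?R"
    unfolding lin2_def fst_conv using t comb_bound[of t] comb_le[OF _ _ sd_fst sd_fst, of t]
    by (meson atLeastAtMost_iff order_trans)
  moreover have "\<bar>snd (lin2 x y t) - snd (lin2 x' y' t)\<bar> \<le> ?R"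
    unfolding lin2_def snd_conv using t comb_bound[of t] comb_le[OF _ _ sd_snd sd_snd, of t]
    by (meson atLeastAtMost_iff order_trans)
  ultimately show "sup_dist (lin2 x y t) (lin2 x' y' t) \<le> ?R"
    unfolding sup_dist_def by simp
qed

lemma lin2_rev: "reversible_bicombing sup_dist upper_half_plane lin2"
  unfolding reversible_bicombing_def
proof (intro conjI ballI lin2_bic)
  fix x y and t :: real
  show "lin2 x y t = lin2 y x (1 - t)" unfolding lin2_def by (simp add: algebra_simps)
qed

lemma Wf_le:
  assumes "0 \<le> r" "r \<le> 1"
  shows "Wf x y r \<le> r*\<bar>fst x - fst y\<bar>" "Wf x y r \<le> (1-r)*\<bar>fst x - fst y\<bar>"
  unfolding Wf_def using W_le[OF assms, of "fst x" "fst y"] by (auto intro: half_le)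

lemma sig2_geo:
  assumes xH: "x \<in> upper_half_plane" and yH: "y \<in> upper_half_plane"
    and s: "s \<in> {0..1}" and t: "t \<in> {0..1}"
  shows "sup_dist (sig2 x y s) (sig2 x y t) = \<bar>s - t\<bar> * sup_dist x y"
proof -
  obtain a p where x: "x = (a,p)" by (cases x)
  obtain b q where y: "y = (b,q)" by (cases y)
  have p: "0 \<le> p" and q: "0 \<le> q" using xH yH x y unfolding upper_half_plane_def by auto
  define T where "T r = (1-r)*p + r*q" for r :: real
  define W where "W r = Wf x y r" for r
  have sig: "sig2 x y r = ((1-r)*a + r*b, max (T r) (W r))" for r
    unfolding sig2_def T_def W_def x y by simp
  have Wl: "\<bar>W s - W t\<bar> \<le> \<bar>s-t\<bar>*\<bar>a-b\<bar>"
    unfolding W_def Wf_def x y fst_conv by (rule half_abs[OF W_lip])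
  have Tl: "\<bar>T s - T t\<bar> = \<bar>s-t\<bar>*\<bar>p-q\<bar>" unfolding T_def by (rule abs_diff_lin)
  have F: "\<bar>((1-s)*a + s*b) - ((1-t)*a + t*b)\<bar> = \<bar>s-t\<bar>*\<bar>a-b\<bar>" by (rule abs_diff_lin)
  have sd: "sup_dist x y = max \<bar>a-b\<bar> \<bar>p-q\<bar>" unfolding sup_dist_def x y by simp
  have sds: "sup_dist (sig2 x y s) (sig2 x y t) =
     max (\<bar>s-t\<bar>*\<bar>a-b\<bar>) \<bar>max (T s) (W s) - max (T t) (W t)\<bar>"
    unfolding sup_dist_def sig fst_conv snd_conv F ..
  show ?thesis
  proof (cases "\<bar>p-q\<bar> \<le> \<bar>a-b\<bar>")
    case True
    have "\<bar>s-t\<bar>*\<bar>p-q\<bar> \<le> \<bar>s-t\<bar>*\<bar>a-b\<bar>" using True by (intro mult_left_mono) auto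
    then have "\<bar>max (T s) (W s) - max (T t) (W t)\<bar> \<le> \<bar>s-t\<bar>*\<bar>a-b\<bar>"
    proof -
      have "max \<bar>T s - T t\<bar> \<bar>W s - W t\<bar> \<le> \<bar>s-t\<bar>*\<bar>a-b\<bar>"
        using Tl Wl \<open>\<bar>s-t\<bar>*\<bar>p-q\<bar> \<le> \<bar>s-t\<bar>*\<bar>a-b\<bar>\<close> by (intro max.boundedI) auto
      then show ?thesis using max_diff[of "T s" "W s" "T t" "W t"] by (rule order_trans[rotated])
    qed
    then show ?thesis unfolding sds sd using True by (simp add: max_absorb1)
  next
    case False
    have WT: "W r \<le> T r" if r: "r \<in> {0..1}" for r
    proof (cases "p \<le> q")
      case True
      have "T r = p + r*(q-p)" unfolding T_def by algebra
      moreover have "r*\<bar>a-b\<bar> \<le> r*(q-p)" using False True r by (intro mult_left_mono) auto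
      moreover have "W r \<le> r*\<bar>a-b\<bar>" using Wf_le[of r x y] r unfolding W_def x y by auto
      ultimately show ?thesis using p by linarith
    next
      case c: False
      have "T r = q + (1-r)*(p-q)" unfolding T_def by algebra
      moreover have "(1-r)*\<bar>a-b\<bar> \<le> (1-r)*(p-q)" using False c r by (intro mult_left_mono) auto
      moreover have "W r \<le> (1-r)*\<bar>a-b\<bar>" using Wf_le[of r x y] r unfolding W_def x y by auto
      ultimately show ?thesis using q by linarith
    qed
    have "max (T s) (W s) = T s" "max (T t) (W t) = T t" using WT[OF s] WT[OF t] by auto
    then have "\<bar>max (T s) (W s) - max (T t) (W t)\<bar> = \<bar>s-t\<bar>*\<bar>p-q\<bar>" using Tl by simp
    then show ?thesis unfolding sds sd by (simp add: max_mult_nonneg)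
  qed
qed

lemma sig2_bic: "bicombing sup_dist upper_half_plane sig2"
  unfolding bicombing_def
proof (intro ballI conjI)
  fix x y t assume x: "x \<in> upper_half_plane" and y: "y \<in> upper_half_plane" and t: "t \<in> {0..1::real}"
  have "0 \<le> (1-t)*snd x + t*snd y" using x y t unfolding upper_half_plane_def by simp
  then show "sig2 x y t \<in> upper_half_plane" unfolding upper_half_plane_def sig2_def by simp
next
  fix x y s t assume "x \<in> upper_half_plane" "y \<in> upper_half_plane" "s \<in> {0..1::real}" "t \<in> {0..1::real}"
  then show "sup_dist (sig2 x y s) (sig2 x y t) = \<bar>s - t\<bar> * sup_dist x y" by (rule sig2_geo)
next
  fix x y assume x: "x \<in> upper_half_plane" and y: "y \<in> upper_half_plane"
  show "sig2 x y 0 = x" using x unfolding sig2_def Wf_def upper_half_plane_def by (cases x) auto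
  show "sig2 x y 1 = y" using y unfolding sig2_def Wf_def upper_half_plane_def by (cases y) auto
qed

lemma sig2_con: "conical_bicombing sup_dist upper_half_plane sig2"
  unfolding conical_bicombing_def
proof (intro conjI ballI sig2_bic)
  fix x y x' y' and t :: real assume t: "t \<in> {0..1}"
  let ?R = "(1 - t) * sup_dist x x' + t * sup_dist y y'"
  let ?F = "(1-t)*\<bar>fst x - fst x'\<bar> + t*\<bar>fst y - fst y'\<bar>"
  have FR: "?F \<le> ?R" using t comb_le[OF _ _ sd_fst sd_fst, of t] by auto
  have "\<bar>fst (sig2 x y t) - fst (sig2 x' y' t)\<bar> \<le> ?R"
    unfolding sig2_def fst_conv using t comb_bound[of t] FR
    by (meson atLeastAtMost_iff order_trans)
  moreover have "\<bar>snd (sig2 x y t) - snd (sig2 x' y' t)\<bar> \<le> ?R"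
  proof -
    have T: "\<bar>((1-t)*snd x + t*snd y) - ((1-t)*snd x' + t*snd y')\<bar> \<le> ?R"
      using t comb_bound[of t] comb_le[OF _ _ sd_snd sd_snd, of t]
      by (meson atLeastAtMost_iff order_trans)
    have "\<bar>Wf x y t - Wf x' y' t\<bar> \<le> ?F"
      unfolding Wf_def using t by (intro half_abs W_con) auto
    then have W: "\<bar>Wf x y t - Wf x' y' t\<bar> \<le> ?R" using FR by (rule order_trans)
    have "max \<bar>((1-t)*snd x + t*snd y) - ((1-t)*snd x' + t*snd y')\<bar> \<bar>Wf x y t - Wf x' y' t\<bar> \<le> ?R"
      using T W by (rule max.boundedI)
    then show ?thesis unfolding sig2_def snd_conv
      using max_diff[of "(1-t)*snd x + t*snd y" "Wf x y t" "(1-t)*snd x' + t*snd y'" "Wf x' y' t"]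
      by (rule order_trans[rotated])
  qed
  ultimately show "sup_dist (sig2 x y t) (sig2 x' y' t) \<le> ?R"
    unfolding sup_dist_def by (rule max.boundedI)
qed

lemma sig2_rev: "reversible_bicombing sup_dist upper_half_plane sig2"
  unfolding reversible_bicombing_def
proof (intro conjI ballI sig2_bic)
  fix x y and t :: real
  show "sig2 x y t = sig2 y x (1 - t)" unfolding sig2_def Wf_def by (simp add: algebra_simps)
qed

theorem proposition1p4:
  shows "\<exists>\<sigma>1 \<sigma>2.
     conical_bicombing sup_dist upper_half_plane \<sigma>1 \<and>
     reversible_bicombing sup_dist upper_half_plane \<sigma>1 \<and>
     conical_bicombing sup_dist upper_half_plane \<sigma>2 \<and>
     reversible_bicombing sup_dist upper_half_plane \<sigma>2 \<and>
     (\<exists>x\<in>upper_half_plane. \<exists>y\<in>upper_half_plane. \<exists>t\<in>{0..1}. \<sigma>1 x y t \<noteq> \<sigma>2 x y t)"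
proof (rule exI[of _ lin2], rule exI[of _ sig2], intro conjI lin2_con lin2_rev sig2_con sig2_rev)
  have "lin2 (-1,0) (1,0) (1/2) \<noteq> sig2 (-1,0) (1,0) (1/2)"
    unfolding lin2_def sig2_def Wf_def by simp
  then show "\<exists>x\<in>upper_half_plane. \<exists>y\<in>upper_half_plane. \<exists>t\<in>{0..1}. lin2 x y t \<noteq> sig2 x y t"
    unfolding upper_half_plane_def by force
qed

end
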